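(* Let $s\ge 1$ and $n>1$ be integers, and let $A$ be a commutative ring with identity in which $-1$ is not a sum of squares. Then $p_{2s}(A[x_1,\dots,x_n])=\infty$.
   Context: For a commutative ring $A$ with identity and a positive integer $m$, the $m$-th Pythagoras number $p_m(A)$ is the least positive integer $\ell$ such that every element of $A$ that is a sum of $m$-th powers of elements of $A$ can be written as a sum of at most $\ell$ $m$-th powers of elements of $A$; if no such $\ell$ exists, $p_m(A)=\infty$. *)

theory Defs
  imports Main "HOL-Library.Poly_Mapping" "HOL-Library.Extended_Nat"
begin

text \<open>Pythagoras numbers of a subring S of a commutative ring (the ring A itself is S = UNIV).\<close>

definition sum_of_powers_len :: "'a::comm_ring_1 set \<Rightarrow> nat \<Rightarrow> nat \<Rightarrow> 'a \<Rightarrow> bool" where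
  "sum_of_powers_len S m l y \<longleftrightarrow> (\<exists>f. (\<forall>i<l. f i \<in> S) \<and> y = (\<Sum>i<l. f i ^ m))"

definition sum_of_powers :: "'a::comm_ring_1 set \<Rightarrow> nat \<Rightarrow> 'a \<Rightarrow> bool" where
  "sum_of_powers S m y \<longleftrightarrow> (\<exists>l. sum_of_powers_len S m l y)"

definition pythagoras_number :: "'a::comm_ring_1 set \<Rightarrow> nat \<Rightarrow> enat" where
  "pythagoras_number S m =
     (if \<exists>l>0. \<forall>y. y \<in> S \<and> sum_of_powers S m y \<longrightarrow> (\<exists>k\<le>l. sum_of_powers_len S m k y)
      then enat (LEAST l. l > 0 \<and> (\<forall>y. y \<in> S \<and> sum_of_powers S m y \<longrightarrow> (\<exists>k\<le>l. sum_of_powers_len S m k y)))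
      else \<infinity>)"

text \<open>The polynomial ring A[x_1,...,x_n] is the subring of polynomials only involving
  the variables with index < n (variable x_i has index i-1).\<close>

type_synonym 'a mpoly_pm = "(nat \<Rightarrow>\<^sub>0 nat) \<Rightarrow>\<^sub>0 'a"

definition poly_ring_n :: "nat \<Rightarrow> 'a::comm_ring_1 mpoly_pm set" where
  "poly_ring_n n = {p. \<forall>mon \<in> Poly_Mapping.keys p. Poly_Mapping.keys mon \<subseteq> {..<n}}"

end

theory Submission
  imports Defs "HOL-Computational_Algebra.Polynomial" "Jordan_Normal_Form.Determinant"
begin


lemma map_poly_add_hom:
  assumes "f 0 = 0" "\<And>x y. f (x + y) = f x + f y"
  shows "map_poly f (p + q) = map_poly f p + map_poly f q"
  by (rule poly_eqI) (simp add: coeff_map_poly assms)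

lemma hom_sum:
  assumes "f 0 = 0" "\<And>x y. f (x + y) = f x + f y"
  shows "f (sum g A) = (\<Sum>a\<in>A. f (g a))"
  by (induction A rule: infinite_finite_induct) (simp_all add: assms)

lemma map_poly_mult_hom:
  assumes "f 0 = 0" "\<And>x y. f (x + y) = f x + f y" "\<And>x y. f (x * y) = f x * f y"
  shows "map_poly f (p * q) = map_poly f p * map_poly f q"
  by (rule poly_eqI) (simp add: coeff_map_poly assms coeff_mult hom_sum[of f, OF assms(1,2)])

lemma map_poly_power_hom:
  assumes "f 0 = 0" "\<And>x y. f (x + y) = f x + f y" "\<And>x y. f (x * y) = f x * f y" "f 1 = 1"
  shows "map_poly f (p ^ n) = map_poly f p ^ n"
  by (induction n) (simp_all add: map_poly_mult_hom[OF assms(1-3)] assms(4))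

lemma map_poly_sum_hom:
  assumes "f 0 = 0" "\<And>x y. f (x + y) = f x + f y"
  shows "map_poly f (sum g A) = (\<Sum>a\<in>A. map_poly f (g a))"
  by (induction A rule: infinite_finite_induct) (simp_all add: map_poly_add_hom[OF assms])

lemma map_poly_prod_hom:
  assumes "f 0 = 0" "\<And>x y. f (x + y) = f x + f y" "\<And>x y. f (x * y) = f x * f y" "f 1 = 1"
  shows "map_poly f (prod g A) = (\<Prod>a\<in>A. map_poly f (g a))"
  by (induction A rule: infinite_finite_induct) (simp_all add: map_poly_mult_hom[OF assms(1-3)] assms(4))

lemma pderiv_sum: "pderiv (sum g A) = (\<Sum>a\<in>A. pderiv (g a))"
  by (induction A rule: infinite_finite_induct) (simp_all add: pderiv_add)


section \<open>Interpolation\<close>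

lemma prod_lin_degree:
  fixes f :: "nat \<Rightarrow> 'b::idom"
  assumes "finite I"
  shows "degree (\<Prod>m\<in>I. [:-f m, 1:]) = card I" "lead_coeff (\<Prod>m\<in>I. [:-f m, 1:]) = 1"
proof -
  have "degree (\<Prod>m\<in>I. [:-f m, 1:]) = (\<Sum>m\<in>I. degree [:-f m, 1:])"
    by (rule degree_prod_sum_eq) auto
  then show "degree (\<Prod>m\<in>I. [:-f m, 1:]) = card I" by simp
  show "lead_coeff (\<Prod>m\<in>I. [:-f m, 1:]) = 1" by (simp add: lead_coeff_prod)
qed

lemma interp:
  fixes p :: "'b::idom poly" and f :: "nat \<Rightarrow> 'b"
  assumes fin: "finite I" and inj: "inj_on f I" and deg: "degree p \<le> card I"
    and roots: "\<forall>m\<in>I. poly p (f m) = 0"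
  shows "p = smult (coeff p (card I)) (\<Prod>m\<in>I. [:-f m, 1:])"
proof -
  define L where "L = (\<Prod>m\<in>I. [:-f m, 1:])"
  define c where "c = coeff p (card I)"
  define q where "q = p - smult c L"
  have degL: "degree L = card I" and lcL: "coeff L (card I) = 1"
    using prod_lin_degree[OF fin, of f] by (simp_all add: L_def)
  have cq: "coeff q (card I) = 0" by (simp add: q_def c_def lcL)
  have dq: "degree q \<le> card I" unfolding q_def
    by (rule order.trans[OF degree_diff_le_max]) (use deg degL degree_smult_le[of c L] in auto)
  have rq: "poly q (f m) = 0" if "m \<in> I" for m
  proof -
    have "poly L (f m) = 0" unfolding L_def poly_prod
      by (rule prod_zero) (use fin that in auto)
    then show ?thesis using roots that by (simp add: q_def)
  qed
  have "q = 0"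
  proof (rule ccontr)
    assume q0: "q \<noteq> 0"
    have "degree q \<noteq> card I" using cq q0 by (metis leading_coeff_0_iff)
    then have dq': "degree q < card I" using dq by simp
    have "f ` I \<subseteq> {x. poly q x = 0}" using rq by auto
    then have "card (f ` I) \<le> card {x. poly q x = 0}"
      by (rule card_mono[OF poly_roots_finite[OF q0]])
    also have "\<dots> \<le> degree q" by (rule card_poly_roots_bound[OF q0])
    finally show False using dq' card_image[OF inj] by simp
  qed
  then show ?thesis by (simp add: q_def L_def c_def)
qed

definition LL :: "nat \<Rightarrow> nat \<Rightarrow> 'b::comm_ring_1 poly" where
  "LL N i = (\<Prod>m\<in>{..<N}-{i}. [:- of_nat m, 1:])"

definition emb :: "'b::comm_ring_1 poly \<Rightarrow> 'b poly poly" where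
  "emb p = map_poly (\<lambda>c. [:c:]) p"

definition evx :: "'b::comm_ring_1 \<Rightarrow> 'b poly poly \<Rightarrow> 'b poly" where
  "evx a G = poly G [:a:]"

definition evy :: "'b::comm_ring_1 \<Rightarrow> 'b poly poly \<Rightarrow> 'b poly" where
  "evy b G = map_poly (\<lambda>c. poly c b) G"

definition UU :: "nat \<Rightarrow> nat \<Rightarrow> 'b::comm_ring_1 poly poly" where
  "UU N i = emb (LL N i) * [:LL N i:]"

lemma map_poly_pCons0: "f 0 = 0 \<Longrightarrow> map_poly f (pCons c q) = pCons (f c) (map_poly f q)"
  by (simp add: map_poly_pCons)

lemma emb_0 [simp]: "emb 0 = 0"
  by (simp add: emb_def)
lemma evy_0 [simp]: "evy b 0 = 0"
  by (simp add: evy_def)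

lemma emb_add: "emb (p + q) = emb p + emb q"
  unfolding emb_def by (rule map_poly_add_hom) auto
lemma emb_mult: "emb (p * q) = emb p * emb (q :: 'b::comm_ring_1 poly)"
  unfolding emb_def by (rule map_poly_mult_hom) auto
lemma emb_pCons: "emb (pCons c q) = pCons [:c:] (emb q)"
  unfolding emb_def by (rule map_poly_pCons0) simp

lemma evy_add: "evy b (p + q) = evy b p + evy b q"
  unfolding evy_def by (rule map_poly_add_hom) auto
lemma evy_mult: "evy b (p * q) = evy b p * evy b (q :: 'b::comm_ring_1 poly poly)"
  unfolding evy_def by (rule map_poly_mult_hom) auto
lemma evy_power: "evy b (p ^ n) = evy b (p :: 'b::comm_ring_1 poly poly) ^ n"
  unfolding evy_def by (rule map_poly_power_hom) auto
lemma evy_sum: "evy b (sum g A) = (\<Sum>a\<in>A. evy b (g a))"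
  unfolding evy_def by (rule map_poly_sum_hom) auto
lemma evy_pCons: "evy b (pCons c q) = pCons (poly c b) (evy b q)"
  unfolding evy_def by (rule map_poly_pCons0) simp
lemma evy_smult: "evy b (smult c q) = smult (poly c b) (evy b q)"
  unfolding evy_def by (rule poly_eqI) (simp add: coeff_map_poly)
lemma evy_const: "evy b [:c:] = [:poly c b:]"
  by (simp add: evy_pCons)
lemma evy_emb: "evy b (emb p) = p"
  unfolding evy_def emb_def by (simp add: map_poly_map_poly o_def)

lemma evx_emb: "evx a (emb p) = [:poly p a:]"
  unfolding evx_def by (induction p) (simp_all add: emb_pCons)

lemma pderiv_emb: "pderiv (emb (p :: 'b::idom poly)) = emb (pderiv p)"
  by (induction p) (simp_all add: emb_pCons pderiv_pCons emb_add)

lemma pderiv_evy: "pderiv (evy b (p :: 'b::idom poly poly)) = evy b (pderiv p)"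
  by (induction p) (simp_all add: evy_pCons pderiv_pCons evy_add)

lemma evx_evy_comm: "poly (evx a G) b = poly (evy b G) a"
  unfolding evx_def by (induction G) (simp_all add: evy_pCons)

lemma pderiv_pconst: "pderiv [:c:] = 0"
  by (simp add: pderiv_pCons)

lemma evx_UU: "evx a (UU N i) = smult (poly (LL N i) a) (LL N i)"
  by (simp add: UU_def evx_emb[unfolded evx_def] evx_def)

lemma evy_UU: "evy b (UU N i) = smult (poly (LL N i) b) (LL N i)"
  by (simp add: UU_def evy_smult evy_emb)

lemma pderiv_UU: "pderiv (UU N i :: 'b::idom poly poly) = emb (pderiv (LL N i)) * [:LL N i:]"
  by (simp add: UU_def pderiv_smult pderiv_emb)

lemma evx_pderiv_UU: "evx a (pderiv (UU N i :: 'b::idom poly poly)) = smult (poly (pderiv (LL N i)) a) (LL N i)"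
  by (simp add: pderiv_UU evx_def evx_emb[unfolded evx_def])


lemma LL_root: "a < N \<Longrightarrow> a \<noteq> i \<Longrightarrow> poly (LL N i) (of_nat a :: 'b::comm_ring_1) = 0"
  unfolding LL_def poly_prod by (rule prod_zero) auto

lemma LL_deg: "i < N \<Longrightarrow> degree (LL N i :: 'b::idom poly) = N - 1"
  unfolding LL_def using prod_lin_degree(1)[of "{..<N}-{i}" "of_nat :: nat \<Rightarrow> 'b"] by simp

lemma LL_lc: "i < N \<Longrightarrow> coeff (LL N i :: 'b::idom poly) (N - 1) = 1"
proof -
  assume i: "i < N"
  have "coeff (LL N i :: 'b poly) (degree (LL N i :: 'b poly)) = 1"
    using prod_lin_degree(2)[of "{..<N}-{i}" "of_nat :: nat \<Rightarrow> 'b"] unfolding LL_def by simp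
  then show ?thesis unfolding LL_deg[OF i] .
qed

lemma LL_ne0: "i < N \<Longrightarrow> (LL N i :: 'b::idom poly) \<noteq> 0"
  using LL_lc[of i N] by (metis coeff_0 zero_neq_one)

lemma rank_bound:
  fixes v w :: "nat \<Rightarrow> nat \<Rightarrow> 'b::idom"
  assumes orth: "\<And>a b. a < N \<Longrightarrow> b < N \<Longrightarrow> (\<Sum>j<l. v j a * w j b) = (if a = b then \<mu> a else 0)"
    and mu: "\<And>a. a < N \<Longrightarrow> \<mu> a \<noteq> 0"
  shows "N \<le> l"
proof (rule ccontr)
  assume "\<not> N \<le> l"
  then have lN: "l < N" by simp
  define V where "V = mat N N (\<lambda>(a,j). if j < l then v j a else 0)"
  define W where "W = mat N N (\<lambda>(j,b). if j < l then w j b else 0)"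
  define D where "D = mat N N (\<lambda>(a,b). if a = b then \<mu> a else (0::'b))"
  have VW: "V * W = D"
  proof (rule eq_matI)
    fix a b assume ab: "a < dim_row D" "b < dim_col D"
    then have ab': "a < N" "b < N" by (simp_all add: D_def)
    have "(V * W) $$ (a, b) = (\<Sum>j\<in>{0..<N}. V $$ (a, j) * W $$ (j, b))"
      using ab' by (simp add: V_def W_def scalar_prod_def)
    also have "\<dots> = (\<Sum>j\<in>{0..<N}. if j < l then v j a * w j b else 0)"
      by (rule sum.cong) (use ab' in \<open>auto simp: V_def W_def\<close>)
    also have "\<dots> = (\<Sum>j\<in>{0..<l}. if j < l then v j a * w j b else 0)"
      by (rule sum.mono_neutral_right) (use lN in auto)
    also have "\<dots> = (\<Sum>j\<in>{0..<l}. v j a * w j b)" by simp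
    also have "\<dots> = D $$ (a, b)" using orth[OF ab'] ab' by (simp add: D_def atLeast0LessThan)
    finally show "(V * W) $$ (a, b) = D $$ (a, b)" .
  qed (simp_all add: V_def W_def D_def)
  have "det V = 0"
  proof -
    have pz: "(\<Prod>i = 0..<N. V $$ (i, p i)) = 0" if p: "p permutes {0..<N}" for p
    proof -
      have "l \<in> p ` {0..<N}" using permutes_image[OF p] lN by simp
      then obtain i where i: "i < N" "p i = l" by auto
      show ?thesis by (rule prod_zero) (use i lN in \<open>auto simp: V_def intro!: bexI[of _ i]\<close>)
    qed
    have "det V = (\<Sum>p\<in>{p. p permutes {0..<N}}. signof p * (\<Prod>i = 0..<N. V $$ (i, p i)))"
      by (rule det_def') (simp add: V_def)
    also have "\<dots> = 0" by (rule sum.neutral) (use pz in auto)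
    finally show ?thesis .
  qed
  moreover have "det D = (\<Prod>a = 0..<N. \<mu> a)"
  proof -
    have "det D = prod_list (diag_mat D)"
      by (rule det_upper_triangular[of _ N]) (auto simp: D_def upper_triangular_def)
    also have "\<dots> = (\<Prod>a = 0..<N. \<mu> a)" by (simp add: prod_list_diag_prod D_def)
    finally show ?thesis .
  qed
  moreover have "(\<Prod>a = 0..<N. \<mu> a) \<noteq> 0" using mu by auto
  moreover have "det D = det V * det W"
    unfolding VW[symmetric] by (rule det_mult[of V N W]) (simp_all add: V_def W_def)
  ultimately show False by simp
qed


section \<open>Real domains\<close>

context
  fixes dummy :: "'b::idom itself"
  assumes real: "\<And>(x::nat\<Rightarrow>'b) k i. (\<Sum>i<k. x i ^ 2) = 0 \<Longrightarrow> i < k \<Longrightarrow> x i = 0"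
begin

lemma real_of_nat_ne0: "n > 0 \<Longrightarrow> (of_nat n :: 'b) \<noteq> 0"
proof
  assume n: "n > 0" and h: "(of_nat n :: 'b) = 0"
  have "(\<Sum>i<n. (\<lambda>_. 1::'b) i ^ 2) = 0" using h by simp
  from real[OF this n] show False by simp
qed

lemma real_of_nat_inj: "(of_nat a :: 'b) = of_nat b \<Longrightarrow> a = b"
proof (rule ccontr)
  assume h: "(of_nat a :: 'b) = of_nat b" "a \<noteq> b"
  show False
  proof (cases "a < b")
    case True
    then have "(of_nat (b - a) :: 'b) = of_nat b - of_nat a" by (simp add: of_nat_diff)
    with h real_of_nat_ne0[of "b - a"] True show False by simp
  next
    case False
    then have "b < a" using h by simp
    then have "(of_nat (a - b) :: 'b) = of_nat a - of_nat b" by (simp add: of_nat_diff)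
    with h real_of_nat_ne0[of "a - b"] \<open>b < a\<close> show False by simp
  qed
qed

lemma real_set:
  fixes x :: "nat \<Rightarrow> 'b"
  assumes "J \<subseteq> {..<k}" "(\<Sum>i\<in>J. (x i :: 'b) ^ 2) = 0" "i \<in> J"
  shows "x i = 0"
proof -
  define y where "y i = (if i \<in> J then x i else 0)" for i
  have "(\<Sum>i<k. y i ^ 2) = (\<Sum>i\<in>J. y i ^ 2)"
    by (rule sum.mono_neutral_right) (use assms(1) in \<open>auto simp: y_def\<close>)
  also have "\<dots> = (\<Sum>i\<in>J. x i ^ 2)" by (rule sum.cong) (auto simp: y_def)
  finally have "(\<Sum>i<k. y i ^ 2) = 0" using assms(2) by simp
  from real[of y k i, OF this] assms show ?thesis by (auto simp: y_def)
qed

lemma real_pow_sum: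
  fixes x :: "nat \<Rightarrow> 'b"
  assumes "s \<ge> 1" "(\<Sum>i<k. (x i :: 'b) ^ (2*s)) = 0" "i < k"
  shows "x i = 0"
proof -
  have "(\<Sum>i<k. (x i ^ s) ^ 2) = 0" using assms(2)
    by (simp add: power_mult[symmetric] mult.commute)
  from real[of "\<lambda>i. x i ^ s" k i, OF this assms(3)] assms(1) show ?thesis by simp
qed

lemma deg_sum_pow:
  fixes h :: "nat \<Rightarrow> 'b poly"
  assumes s: "s \<ge> 1" and P: "(\<Sum>j<l. h j ^ (2*s)) = P" and j: "j < l"
  shows "2*s * degree (h j) \<le> degree P"
proof -
  define d where "d = Max ((\<lambda>j. degree (h j)) ` {..<l})"
  define J where "J = {j. j < l \<and> degree (h j) = d}"
  have dj: "degree (h i) \<le> d" if "i < l" for i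
    unfolding d_def by (rule Max_ge) (use that in auto)
  obtain j0 where j0: "j0 < l" "degree (h j0) = d"
  proof -
    have "d \<in> (\<lambda>j. degree (h j)) ` {..<l}" unfolding d_def
      by (rule Max_in) (use j in auto)
    then show ?thesis using that by auto
  qed
  have c1: "coeff (h i ^ (2*s)) (2*s*d) = 0" if "i < l" "i \<notin> J" for i
  proof -
    have "degree (h i) < d" using dj[OF that(1)] that by (auto simp: J_def)
    then have "degree (h i ^ (2*s)) < 2*s*d"
    proof -
      have "degree (h i ^ (2*s)) \<le> 2*s * degree (h i)" using degree_power_le[of "h i" "2*s"] by (simp add: mult.commute)
      also have "\<dots> < 2*s*d" using \<open>degree (h i) < d\<close> s by simp
      finally show ?thesis .
    qed
    then show ?thesis by (simp add: coeff_eq_0)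
  qed
  have c2: "coeff (h i ^ (2*s)) (2*s*d) = (lead_coeff (h i) ^ s) ^ 2" if "i \<in> J" for i
  proof (cases "h i = 0")
    case True
    then show ?thesis using s by (simp add: power_0_left)
  next
    case False
    then have "degree (h i ^ (2*s)) = 2*s*d" using that by (simp add: degree_power_eq J_def)
    then have "coeff (h i ^ (2*s)) (2*s*d) = lead_coeff (h i ^ (2*s))" by simp
    also have "\<dots> = (lead_coeff (h i) ^ s) ^ 2"
      by (simp add: lead_coeff_power power_mult[symmetric] mult.commute)
    finally show ?thesis .
  qed
  have "coeff P (2*s*d) = (\<Sum>i<l. coeff (h i ^ (2*s)) (2*s*d))"
    using P by (auto simp: coeff_sum)
  also have "\<dots> = (\<Sum>i\<in>J. coeff (h i ^ (2*s)) (2*s*d))"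
    by (rule sum.mono_neutral_right) (use c1 in \<open>auto simp: J_def\<close>)
  also have "\<dots> = (\<Sum>i\<in>J. (lead_coeff (h i) ^ s) ^ 2)" by (rule sum.cong) (auto simp: c2)
  finally have cP: "coeff P (2*s*d) = (\<Sum>i\<in>J. (lead_coeff (h i) ^ s) ^ 2)" .
  show ?thesis
  proof (cases "coeff P (2*s*d) = 0")
    case False
    then have "2*s*d \<le> degree P" by (rule le_degree)
    moreover have "2*s*degree (h j) \<le> 2*s*d" using dj[OF j] by simp
    ultimately show ?thesis by linarith
  next
    case True
    have "j0 \<in> J" using j0 by (auto simp: J_def)
    have "(\<lambda>i. lead_coeff (h i) ^ s) j0 = 0"
      by (rule real_set[of J l]) (use True cP \<open>j0 \<in> J\<close> in \<open>auto simp: J_def\<close>)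
    then have "h j0 = 0" using s by simp
    then have "d = 0" using j0 by simp
    then show ?thesis using dj[OF j] by simp
  qed
qed


lemma diff_ne0: "a \<noteq> b \<Longrightarrow> (of_nat a :: 'b) - of_nat b \<noteq> 0"
  using real_of_nat_inj by auto

lemma LL_self: "poly (LL N i) (of_nat i :: 'b) \<noteq> 0"
  unfolding LL_def poly_prod by (auto dest: real_of_nat_inj)

lemma LL_pderiv:
  assumes "a < N" "b < N" "a \<noteq> b"
  shows "poly (pderiv (LL N b)) (of_nat a :: 'b) \<noteq> 0"
proof -
  define A where "A = {..<N} - {b}"
  define f where "f m = ([:- of_nat m, 1:] :: 'b poly)" for m
  have aA: "a \<in> A" using assms by (auto simp: A_def)
  have "poly (pderiv (LL N b)) (of_nat a) = (\<Sum>a'\<in>A. poly (prod f (A - {a'})) (of_nat a) * poly (pderiv (f a')) (of_nat a))"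
    unfolding LL_def pderiv_prod poly_sum poly_mult A_def f_def by simp
  also have "\<dots> = poly (prod f (A - {a})) (of_nat a) * poly (pderiv (f a)) (of_nat a)"
  proof -
    have z: "poly (prod f (A - {a'})) (of_nat a) * poly (pderiv (f a')) (of_nat a) = 0"
      if "a' \<in> A - {a}" for a'
    proof -
      have "poly (prod f (A - {a'})) (of_nat a) = 0"
        unfolding poly_prod by (intro prod_zero) (use aA that in \<open>auto simp: A_def f_def\<close>)
      then show ?thesis by simp
    qed
    have "finite A" by (simp add: A_def)
    then show ?thesis using aA z by (simp add: sum.remove[OF \<open>finite A\<close> aA] sum.neutral)
  qed
  also have "\<dots> = (\<Prod>m\<in>A - {a}. of_nat a - of_nat m)"
    by (simp add: f_def poly_prod pderiv_pCons)
  also have "\<dots> \<noteq> 0" by (subst prod_zero_iff) (auto dest: real_of_nat_inj simp: A_def)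
  finally show ?thesis .
qed


lemma evx_sum: "evx a (sum g A) = (\<Sum>i\<in>A. evx a (g i))"
  unfolding evx_def by (simp add: poly_sum)

lemma core:
  fixes g :: "nat \<Rightarrow> 'b poly poly"
  assumes s: "s \<ge> 1" and eq: "(\<Sum>j<l. g j ^ (2*s)) = (\<Sum>i<N. UU N i ^ (2*s))"
  shows "N \<le> l"
proof -
  define p where "p = 2*s"
  have p2: "p \<ge> 2" using s by (simp add: p_def)
  have pS: "p = Suc (p - 1)" using p2 by simp
  define lam where "lam a = poly (LL N a) (of_nat a :: 'b)" for a
  have lam0: "lam a \<noteq> 0" for a by (simp add: lam_def LL_self)
  have eqp: "(\<Sum>j<l. g j ^ p) = (\<Sum>i<N. UU N i ^ p)" using eq by (simp add: p_def)
  have inj: "inj_on (of_nat :: nat \<Rightarrow> 'b) I" for I by (auto intro: inj_onI dest: real_of_nat_inj)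
  have cardI: "card ({..<N} - {a}) = N - 1" if "a < N" for a using that by simp
  have root: "poly (LL N i) (of_nat m :: 'b) = 0" if "m < N" "m \<noteq> i" for m i
    using LL_root[OF that] .
  have smne: "smult (lam a) (LL N a) \<noteq> 0" if "a < N" for a
    using LL_ne0[OF that] lam0[of a] by simp
  \<comment> \<open>restriction to the vertical line x = a\<close>
  have evxF: "(\<Sum>i<N. evx (of_nat a) (UU N i ^ p)) = smult (lam a) (LL N a) ^ p" if a: "a < N" for a
  proof -
    have "(\<Sum>i<N. evx (of_nat a) (UU N i ^ p)) = (\<Sum>i<N. if i = a then smult (lam a) (LL N a) ^ p else 0)"
    proof (rule sum.cong)
      fix i assume "i \<in> {..<N}"
      show "evx (of_nat a) (UU N i ^ p) = (if i = a then smult (lam a) (LL N a) ^ p else 0)"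
      proof (cases "i = a")
        case True then show ?thesis by (simp add: evx_def poly_power evx_UU[unfolded evx_def] lam_def)
      next
        case False
        then have "poly (LL N i) (of_nat a :: 'b) = 0" using root[OF a] by metis
        then show ?thesis using p2 False by (simp add: evx_def poly_power evx_UU[unfolded evx_def])
      qed
    qed simp
    then show ?thesis using a by simp
  qed
  have A1: "(\<Sum>j<l. evx (of_nat a) (g j) ^ p) = smult (lam a) (LL N a) ^ p" if a: "a < N" for a
  proof -
    have "(\<Sum>j<l. evx (of_nat a) (g j) ^ p) = evx (of_nat a) (\<Sum>j<l. g j ^ p)"
      by (simp add: evx_def poly_sum poly_power)
    also have "\<dots> = (\<Sum>i<N. evx (of_nat a) (UU N i ^ p))" by (simp add: eqp evx_sum)
    finally show ?thesis using evxF[OF a] by simp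
  qed
  define c where "c j a = coeff (evx (of_nat a) (g j)) (N - 1)" for j a
  have cA: "evx (of_nat a) (g j) = smult (c j a) (LL N a)" if a: "a < N" and j: "j < l" for a j
  proof -
    have "2*s * degree (evx (of_nat a) (g j)) \<le> degree (smult (lam a) (LL N a) ^ p)"
      by (rule deg_sum_pow[OF s _ j]) (use A1[OF a] in \<open>simp add: p_def\<close>)
    also have "\<dots> = p * (N - 1)"
      using LL_ne0[OF a] lam0[of a] by (simp add: degree_power_eq[OF smne[OF a]] degree_smult_eq LL_deg[OF a])
    finally have deg: "degree (evx (of_nat a) (g j)) \<le> N - 1" using s by (simp add: p_def)
    have roots: "\<forall>m\<in>{..<N}-{a}. poly (evx (of_nat a) (g j)) (of_nat m) = 0"
    proof
      fix m assume m: "m \<in> {..<N}-{a}"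
      have "(\<Sum>j<l. poly (evx (of_nat a) (g j)) (of_nat m) ^ (2*s)) = poly (smult (lam a) (LL N a) ^ p) (of_nat m)"
        using arg_cong[OF A1[OF a], of "\<lambda>q. poly q (of_nat m)"] by (simp add: poly_sum p_def)
      also have "\<dots> = 0"
      proof -
        have "poly (LL N a) (of_nat m :: 'b) = 0" using root[of m a] m by simp
        then show ?thesis using p2 by (simp add: poly_power)
      qed
      finally show "poly (evx (of_nat a) (g j)) (of_nat m) = 0"
        by (rule real_pow_sum[OF s _ j])
    qed
    have "evx (of_nat a) (g j) = smult (coeff (evx (of_nat a) (g j)) (card ({..<N}-{a}))) (\<Prod>m\<in>{..<N}-{a}. [:- of_nat m, 1:])"
      by (rule interp) (use deg roots cardI[OF a] inj in auto)
    then show ?thesis using cardI[OF a] by (simp add: c_def LL_def)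
  qed
  \<comment> \<open>restriction to the horizontal line y = b\<close>
  have evyF: "(\<Sum>i<N. evy (of_nat b) (UU N i ^ p)) = smult (lam b) (LL N b) ^ p" if b: "b < N" for b
  proof -
    have "(\<Sum>i<N. evy (of_nat b) (UU N i ^ p)) = (\<Sum>i<N. if i = b then smult (lam b) (LL N b) ^ p else 0)"
    proof (rule sum.cong)
      fix i assume "i \<in> {..<N}"
      show "evy (of_nat b) (UU N i ^ p) = (if i = b then smult (lam b) (LL N b) ^ p else 0)"
      proof (cases "i = b")
        case True then show ?thesis by (simp add: evy_power evy_UU lam_def)
      next
        case False
        then have "poly (LL N i) (of_nat b :: 'b) = 0" using root[OF b] by metis
        then show ?thesis using p2 False by (simp add: evy_power evy_UU)
      qed
    qed simp
    then show ?thesis using b by simp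
  qed
  have B1: "(\<Sum>j<l. evy (of_nat b) (g j) ^ p) = smult (lam b) (LL N b) ^ p" if b: "b < N" for b
  proof -
    have "(\<Sum>j<l. evy (of_nat b) (g j) ^ p) = evy (of_nat b) (\<Sum>j<l. g j ^ p)"
      by (simp add: evy_sum evy_power)
    also have "\<dots> = (\<Sum>i<N. evy (of_nat b) (UU N i ^ p))" by (simp add: eqp evy_sum)
    finally show ?thesis using evyF[OF b] by simp
  qed
  define e where "e j b = coeff (evy (of_nat b) (g j)) (N - 1)" for j b
  have eB: "evy (of_nat b) (g j) = smult (e j b) (LL N b)" if b: "b < N" and j: "j < l" for b j
  proof -
    have "2*s * degree (evy (of_nat b) (g j)) \<le> degree (smult (lam b) (LL N b) ^ p)"
      by (rule deg_sum_pow[OF s _ j]) (use B1[OF b] in \<open>simp add: p_def\<close>)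
    also have "\<dots> = p * (N - 1)"
      using LL_ne0[OF b] lam0[of b] by (simp add: degree_power_eq[OF smne[OF b]] degree_smult_eq LL_deg[OF b])
    finally have deg: "degree (evy (of_nat b) (g j)) \<le> N - 1" using s by (simp add: p_def)
    have roots: "\<forall>m\<in>{..<N}-{b}. poly (evy (of_nat b) (g j)) (of_nat m) = 0"
    proof
      fix m assume m: "m \<in> {..<N}-{b}"
      have "(\<Sum>j<l. poly (evy (of_nat b) (g j)) (of_nat m) ^ (2*s)) = poly (smult (lam b) (LL N b) ^ p) (of_nat m)"
        using arg_cong[OF B1[OF b], of "\<lambda>q. poly q (of_nat m)"] by (simp add: poly_sum p_def)
      also have "\<dots> = 0"
      proof -
        have "poly (LL N b) (of_nat m :: 'b) = 0" using root[of m b] m by simp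
        then show ?thesis using p2 by (simp add: poly_power)
      qed
      finally show "poly (evy (of_nat b) (g j)) (of_nat m) = 0"
        by (rule real_pow_sum[OF s _ j])
    qed
    have "evy (of_nat b) (g j) = smult (coeff (evy (of_nat b) (g j)) (card ({..<N}-{b}))) (\<Prod>m\<in>{..<N}-{b}. [:- of_nat m, 1:])"
      by (rule interp) (use deg roots cardI[OF b] inj in auto)
    then show ?thesis using cardI[OF b] by (simp add: e_def LL_def)
  qed
  have ce: "c j b = e j b" if b: "b < N" and j: "j < l" for b j
  proof -
    have "poly (evx (of_nat b) (g j)) (of_nat b) = poly (evy (of_nat b) (g j)) (of_nat b)"
      by (rule evx_evy_comm)
    then have "c j b * lam b = e j b * lam b"
      by (simp add: cA[OF b j] eB[OF b j] lam_def)
    then show ?thesis using lam0[of b] by simp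
  qed
  define D where "D j a = evx (of_nat a) (pderiv (g j))" for j a
  have Db: "poly (D j a) (of_nat b) = c j b * poly (pderiv (LL N b)) (of_nat a)"
    if "b < N" "j < l" for j a b
  proof -
    have "poly (D j a) (of_nat b) = poly (evy (of_nat b) (pderiv (g j))) (of_nat a)"
      unfolding D_def by (rule evx_evy_comm)
    also have "\<dots> = poly (pderiv (smult (e j b) (LL N b))) (of_nat a)"
      by (simp add: pderiv_evy[symmetric] eB[OF that])
    finally show ?thesis by (simp add: pderiv_smult ce[OF that])
  qed
  have pdg: "pderiv (q ^ p) = smult (of_nat p) (q ^ (p - 1)) * pderiv q" for q :: "'b poly poly"
    using pderiv_power_Suc[of q "p - 1"] pS by simp
  have orth: "(\<Sum>j<l. c j a ^ (p - 1) * c j b) = 0" if a: "a < N" and b: "b < N" and ab: "a \<noteq> b" for a b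
  proof -
    define L :: "'b poly" where "L = LL N a"
    define pd where "pd = poly (pderiv (LL N a)) (of_nat a :: 'b)"
    have "evx (of_nat a) (pderiv (\<Sum>j<l. g j ^ p)) = evx (of_nat a) (pderiv (\<Sum>i<N. UU N i ^ p))"
      by (simp add: eqp)
    moreover have "evx (of_nat a) (pderiv (\<Sum>j<l. g j ^ p)) = of_nat p * L ^ (p - 1) * (\<Sum>j<l. smult (c j a ^ (p - 1)) (D j a))"
    proof -
      have "evx (of_nat a) (pderiv (\<Sum>j<l. g j ^ p)) = (\<Sum>j<l. of_nat p * evx (of_nat a) (g j) ^ (p - 1) * D j a)"
        by (simp add: pderiv_sum pdg D_def evx_def poly_power poly_sum poly_mult mult.assoc)
      also have "\<dots> = (\<Sum>j<l. of_nat p * L ^ (p - 1) * smult (c j a ^ (p - 1)) (D j a))"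
        by (rule sum.cong) (auto simp: cA[OF a] L_def smult_power mult_smult_left mult_smult_right)
      finally show ?thesis by (simp add: sum_distrib_left)
    qed
    moreover have "evx (of_nat a) (pderiv (\<Sum>i<N. UU N i ^ p)) = of_nat p * L ^ (p - 1) * smult (lam a ^ (p - 1) * pd) L"
    proof -
      have "evx (of_nat a) (pderiv (\<Sum>i<N. UU N i ^ p)) = (\<Sum>i<N. evx (of_nat a) (pderiv (UU N i ^ p)))"
        by (simp add: pderiv_sum evx_sum)
      also have "\<dots> = (\<Sum>i<N. if i = a then of_nat p * L ^ (p - 1) * smult (lam a ^ (p - 1) * pd) L else 0)"
      proof (rule sum.cong)
        fix i assume "i \<in> {..<N}"
        have e1: "evx (of_nat a :: 'b) (pderiv (UU N i ^ p)) = of_nat p * evx (of_nat a) (UU N i) ^ (p - 1) * evx (of_nat a) (pderiv (UU N i))"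
        proof -
          have "pderiv (UU N i ^ p :: 'b poly poly) = smult (of_nat p) (UU N i ^ (p - 1)) * pderiv (UU N i)" by (rule pdg)
          then show ?thesis by (simp add: evx_def poly_power poly_mult poly_smult mult.assoc)
        qed
        show "evx (of_nat a) (pderiv (UU N i ^ p)) = (if i = a then of_nat p * L ^ (p - 1) * smult (lam a ^ (p - 1) * pd) L else 0)"
        proof (cases "i = a")
          case True then show ?thesis unfolding e1
            by (simp add:  evx_UU evx_pderiv_UU L_def lam_def pd_def smult_power mult_smult_left mult_smult_right mult_ac power_Suc2[symmetric])
        next
          case False
          then have "poly (LL N i) (of_nat a :: 'b) = 0" using root[OF a] by metis
          then show ?thesis using p2 False by (simp add: e1 evx_UU)
        qed
      qed simp
      finally show ?thesis using a by simp
    qed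
    ultimately have "of_nat p * L ^ (p - 1) * (\<Sum>j<l. smult (c j a ^ (p - 1)) (D j a)) = of_nat p * L ^ (p - 1) * smult (lam a ^ (p - 1) * pd) L"
      by simp
    moreover have "(of_nat p :: 'b poly) * L ^ (p - 1) \<noteq> 0"
    proof -
      have "(of_nat p :: 'b) \<noteq> 0" using p2 by (intro real_of_nat_ne0) simp
      then have "(of_nat p :: 'b poly) \<noteq> 0" by (simp add: of_nat_poly)
      moreover have "L ^ (p - 1) \<noteq> 0" using LL_ne0[OF a, where 'b='b] by (simp add: L_def)
      ultimately show ?thesis by simp
    qed
    ultimately have X: "(\<Sum>j<l. smult (c j a ^ (p - 1)) (D j a)) = smult (lam a ^ (p - 1) * pd) L"
      using mult_left_cancel by blast
    have "(\<Sum>j<l. c j a ^ (p - 1) * poly (D j a) (of_nat b)) = 0"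
      using arg_cong[OF X, of "\<lambda>q. poly q (of_nat b)"] root[of b a] b ab
      by (simp add: poly_sum L_def)
    then have "(\<Sum>j<l. c j a ^ (p - 1) * c j b) * poly (pderiv (LL N b)) (of_nat a) = 0"
      by (simp add: Db[OF b] sum_distrib_right mult.assoc)
    then show ?thesis using LL_pderiv[OF a b ab] by simp
  qed
  have diag: "(\<Sum>j<l. c j a ^ (p - 1) * c j a) = lam a ^ p" if a: "a < N" for a
  proof -
    have "(\<Sum>j<l. (c j a * lam a) ^ p) = (lam a * lam a) ^ p"
      using arg_cong[OF A1[OF a], of "\<lambda>q. poly q (of_nat a)"]
      by (simp add: poly_sum cA[OF a] lam_def poly_power)
    then have "(\<Sum>j<l. c j a ^ p) * lam a ^ p = lam a ^ p * lam a ^ p"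
      by (simp add: power_mult_distrib sum_distrib_right)
    then have "(\<Sum>j<l. c j a ^ p) = lam a ^ p" using lam0[of a] by simp
    moreover have "c j a ^ (p - 1) * c j a = c j a ^ p" for j
      using pS by (metis power_Suc2)
    ultimately show ?thesis by simp
  qed
  show ?thesis
  proof (rule rank_bound[where v = "\<lambda>j a. c j a ^ (p - 1)" and w = c and \<mu> = "\<lambda>a. lam a ^ p"])
    fix a b assume "a < N" "b < N"
    then show "(\<Sum>j<l. c j a ^ (p - 1) * c j b) = (if a = b then lam a ^ p else 0)"
      using orth diag by auto
  next
    fix a show "lam a ^ p \<noteq> 0" using lam0 by simp
  qed
qed
end



section \<open>Sums of squares\<close>

inductive_set SOS :: "'a::comm_ring_1 set" where
  SOS_0: "0 \<in> SOS"
| SOS_add: "a \<in> SOS \<Longrightarrow> a + x ^ 2 \<in> SOS"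

lemma SOS_sq: "x ^ 2 \<in> SOS"
  using SOS_add[OF SOS_0, of x] by simp

lemma SOS_plus': "b \<in> SOS \<Longrightarrow> a \<in> SOS \<Longrightarrow> a + b \<in> SOS"
proof (induction b rule: SOS.induct)
  case SOS_0 then show ?case by simp
next
  case (SOS_add b x)
  then show ?case using SOS.SOS_add[OF SOS_add.IH[OF SOS_add.prems]] by (simp add: add.assoc)
qed

lemma SOS_plus: "a \<in> SOS \<Longrightarrow> b \<in> SOS \<Longrightarrow> a + b \<in> SOS"
  using SOS_plus' by blast

lemma SOS_mult_sq: "a \<in> SOS \<Longrightarrow> a * y ^ 2 \<in> SOS"
proof (induction a rule: SOS.induct)
  case SOS_0 then show ?case by (simp add: SOS.SOS_0)
next
  case (SOS_add a x)
  have "(a + x ^ 2) * y ^ 2 = a * y ^ 2 + (x * y) ^ 2" by (simp add: algebra_simps power_mult_distrib)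
  then show ?case using SOS.SOS_add[OF SOS_add.IH] by simp
qed

lemma SOS_mult': "b \<in> SOS \<Longrightarrow> a \<in> SOS \<Longrightarrow> a * b \<in> SOS"
proof (induction b rule: SOS.induct)
  case SOS_0 then show ?case by (simp add: SOS.SOS_0)
next
  case (SOS_add b x)
  have "a * (b + x ^ 2) = a * b + a * x ^ 2" by (simp add: algebra_simps)
  then show ?case using SOS_plus[OF SOS_add.IH[OF SOS_add.prems] SOS_mult_sq[OF SOS_add.prems]] by simp
qed

lemma SOS_mult: "a \<in> SOS \<Longrightarrow> b \<in> SOS \<Longrightarrow> a * b \<in> SOS"
  using SOS_mult' by blast

lemma SOS_sum: "(\<Sum>i<(k::nat). (f i :: 'a::comm_ring_1) ^ 2) \<in> SOS"
  by (induction k) (simp_all add: SOS.SOS_0 SOS.SOS_add)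

lemma SOS_sum_powers: "sum_of_powers (UNIV :: 'a::comm_ring_1 set) 2 y \<longleftrightarrow> y \<in> SOS"
proof
  assume "sum_of_powers UNIV 2 y"
  then obtain k :: nat and f where "y = (\<Sum>i<k. (f i :: 'a) ^ 2)"
    unfolding sum_of_powers_def sum_of_powers_len_def by auto
  then show "y \<in> SOS" using SOS_sum by simp
next
  assume "y \<in> SOS"
  then show "sum_of_powers UNIV 2 y"
  proof (induction y rule: SOS.induct)
    case SOS_0
    show ?case unfolding sum_of_powers_def sum_of_powers_len_def
      by (rule exI[of _ 0]) simp
  next
    case (SOS_add a x)
    then obtain k :: nat and f where kf: "a = (\<Sum>i<k. (f i :: 'a) ^ 2)"
      unfolding sum_of_powers_def sum_of_powers_len_def by auto
    define g where "g = f(k := x)"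
    have "a + x ^ 2 = (\<Sum>i<Suc k. g i ^ 2)" using kf by (simp add: g_def)
    then show ?case unfolding sum_of_powers_def sum_of_powers_len_def
      by (intro exI[of _ "Suc k"] exI[of _ g]) simp
  qed
qed

section \<open>Ideals\<close>

definition myideal :: "'a::comm_ring_1 set \<Rightarrow> bool" where
  "myideal I \<longleftrightarrow> 0 \<in> I \<and> (\<forall>x\<in>I. \<forall>y\<in>I. x + y \<in> I) \<and> (\<forall>x\<in>I. \<forall>r. r * x \<in> I)"

lemma myideal_0: "myideal I \<Longrightarrow> 0 \<in> I" by (simp add: myideal_def)
lemma myideal_add: "myideal I \<Longrightarrow> x \<in> I \<Longrightarrow> y \<in> I \<Longrightarrow> x + y \<in> I" by (simp add: myideal_def)
lemma myideal_mult: "myideal I \<Longrightarrow> x \<in> I \<Longrightarrow> r * x \<in> I" by (simp add: myideal_def)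
lemma myideal_mult2: "myideal I \<Longrightarrow> x \<in> I \<Longrightarrow> x * r \<in> I" using myideal_mult[of I x r] by (simp add: mult.commute)
lemma myideal_neg: "myideal I \<Longrightarrow> x \<in> I \<Longrightarrow> - x \<in> I" using myideal_mult[of I x "-1"] by simp
lemma myideal_diff: "myideal I \<Longrightarrow> x \<in> I \<Longrightarrow> y \<in> I \<Longrightarrow> x - y \<in> I"
  using myideal_add[of I x "- y"] myideal_neg[of I y] by simp

definition good :: "'a::comm_ring_1 set \<Rightarrow> 'a set \<Rightarrow> bool" where
  "good S I \<longleftrightarrow> myideal I \<and> (\<forall>\<sigma>\<in>S. 1 + \<sigma> \<notin> I)"

lemma good_exists_max:
  assumes "\<forall>\<sigma>\<in>S. 1 + \<sigma> \<noteq> (0::'a::comm_ring_1)"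
  shows "\<exists>M. good S M \<and> (\<forall>X. good S X \<longrightarrow> M \<subseteq> X \<longrightarrow> X = M)"
proof -
  let ?A = "{I. good S I}"
  have "\<exists>M\<in>?A. \<forall>X\<in>?A. M \<subseteq> X \<longrightarrow> X = M"
  proof (rule Zorn_Lemma2, intro ballI)
    fix C assume C: "C \<in> chains ?A"
    show "\<exists>U\<in>?A. \<forall>X\<in>C. X \<subseteq> U"
    proof (cases "C = {}")
      case True
      have "good S {0}" using assms by (auto simp: good_def myideal_def)
      then show ?thesis using True by blast
    next
      case False
      have CA: "C \<subseteq> ?A" and ch: "\<And>X Y. X \<in> C \<Longrightarrow> Y \<in> C \<Longrightarrow> X \<subseteq> Y \<or> Y \<subseteq> X"
        using C by (auto simp: chains_def chain_subset_def)
      have "good S (\<Union>C)"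
        unfolding good_def myideal_def
      proof (intro conjI ballI allI)
        obtain X where "X \<in> C" using False by blast
        then show "0 \<in> \<Union>C" using CA by (auto simp: good_def myideal_def)
      next
        fix x y assume "x \<in> \<Union>C" "y \<in> \<Union>C"
        then obtain X Y where XY: "X \<in> C" "Y \<in> C" "x \<in> X" "y \<in> Y" by blast
        show "x + y \<in> \<Union>C"
        proof (cases "X \<subseteq> Y")
          case True
          then show ?thesis using XY CA myideal_add[of Y x y] by (auto simp: good_def)
        next
          case False
          then have "Y \<subseteq> X" using ch XY by blast
          then show ?thesis using XY CA myideal_add[of X x y] by (auto simp: good_def)
        qed
      next
        fix x r assume "x \<in> \<Union>C"
        then obtain X where "X \<in> C" "x \<in> X" by blast
        then show "r * x \<in> \<Union>C" using CA myideal_mult[of X x r] by (auto simp: good_def)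
      next
        fix \<sigma> assume "\<sigma> \<in> S"
        then show "1 + \<sigma> \<notin> \<Union>C" using CA by (auto simp: good_def)
      qed
      then show ?thesis by blast
    qed
  qed
  then show ?thesis by auto
qed

definition Sset :: "'a::comm_ring_1 set" where
  "Sset = (if (-1::'a) \<in> SOS then {0} else SOS)"

lemma Sset_0: "0 \<in> Sset" by (simp add: Sset_def SOS_0)
lemma Sset_plus: "a \<in> Sset \<Longrightarrow> b \<in> Sset \<Longrightarrow> a + b \<in> Sset"
  by (auto simp: Sset_def SOS_plus split: if_splits)
lemma Sset_mult: "a \<in> Sset \<Longrightarrow> b \<in> Sset \<Longrightarrow> a * b \<in> Sset"
  by (auto simp: Sset_def SOS_mult split: if_splits)

lemma Sset_ok: "\<forall>\<sigma>\<in>(Sset :: 'a::comm_ring_1 set). 1 + \<sigma> \<noteq> 0"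
proof
  fix \<sigma> :: 'a assume s: "\<sigma> \<in> Sset"
  show "1 + \<sigma> \<noteq> 0"
  proof (cases "(-1::'a) \<in> SOS")
    case True then show ?thesis using s by (simp add: Sset_def)
  next
    case False
    then have "\<sigma> \<in> SOS" using s by (simp add: Sset_def)
    moreover have "1 + \<sigma> = 0 \<Longrightarrow> \<sigma> = -1" by (simp add: eq_neg_iff_add_eq_0 add.commute)
    ultimately show ?thesis using False by auto
  qed
qed

definition realP :: "'a::comm_ring_1 set" where
  "realP = (SOME M. good Sset M \<and> (\<forall>X. good Sset X \<longrightarrow> M \<subseteq> X \<longrightarrow> X = M))"

lemma realP_max: "good (Sset :: 'a::comm_ring_1 set) realP \<and> (\<forall>X. good (Sset :: 'a set) X \<longrightarrow> realP \<subseteq> X \<longrightarrow> X = realP)"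
proof -
  have ex: "\<exists>M. good (Sset :: 'a set) M \<and> (\<forall>X. good Sset X \<longrightarrow> M \<subseteq> X \<longrightarrow> X = M)"
    by (rule good_exists_max) (rule Sset_ok)
  show ?thesis unfolding realP_def by (rule someI_ex[OF ex])
qed

lemma realP_ideal: "myideal realP" using realP_max unfolding good_def by blast

lemma realP_one: "(1::'a::comm_ring_1) \<notin> realP"
  using realP_max Sset_0 by (force simp: good_def)

lemma realP_ext:
  assumes a: "(a::'a::comm_ring_1) \<notin> realP"
  shows "\<exists>\<sigma>\<in>Sset. \<exists>m\<in>realP. \<exists>r. 1 + \<sigma> = m + a * r"
proof -
  define X where "X = {m + a * r | m r. m \<in> realP}"
  have idX: "myideal X" unfolding myideal_def X_def
  proof (intro conjI ballI allI)
    show "0 \<in> {m + a * r |m r. m \<in> realP}"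
      using myideal_0[OF realP_ideal] by (auto intro!: exI[of _ 0])
  next
    fix x y assume "x \<in> {m + a * r |m r. m \<in> realP}" "y \<in> {m + a * r |m r. m \<in> realP}"
    then obtain m1 r1 m2 r2 where "x = m1 + a * r1" "y = m2 + a * r2" "m1 \<in> realP" "m2 \<in> realP" by blast
    moreover have "x + y = (m1 + m2) + a * (r1 + r2)" using \<open>x = m1 + a * r1\<close> \<open>y = m2 + a * r2\<close>
      by (simp add: algebra_simps)
    ultimately show "x + y \<in> {m + a * r |m r. m \<in> realP}"
      using myideal_add[OF realP_ideal, of m1 m2] by blast
  next
    fix x r assume "x \<in> {m + a * r |m r. m \<in> realP}"
    then obtain m1 r1 where "x = m1 + a * r1" "m1 \<in> realP" by blast
    moreover have "r * x = (r * m1) + a * (r * r1)" using \<open>x = m1 + a * r1\<close>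
      by (simp add: algebra_simps)
    ultimately show "r * x \<in> {m + a * r |m r. m \<in> realP}"
      using myideal_mult[OF realP_ideal, of m1 r] by blast
  qed
  have sub: "realP \<subseteq> X"
  proof
    fix x :: 'a assume "x \<in> realP"
    moreover have "x = x + a * 0" by simp
    ultimately show "x \<in> X" unfolding X_def by blast
  qed
  have "a = 0 + a * 1" by simp
  then have "a \<in> X" unfolding X_def using myideal_0[OF realP_ideal] by blast
  then have "X \<noteq> realP" using a by blast
  then have "\<not> good Sset X" using realP_max sub by blast
  then obtain \<sigma> where "\<sigma> \<in> Sset" "1 + \<sigma> \<in> X" using idX by (auto simp: good_def)
  then show ?thesis unfolding X_def by blast
qed

lemma realP_prime:
  assumes "(a::'a::comm_ring_1) * b \<in> realP"
  shows "a \<in> realP \<or> b \<in> realP"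
proof (rule ccontr)
  assume "\<not> (a \<in> realP \<or> b \<in> realP)"
  then have na: "a \<notin> realP" and nb: "b \<notin> realP" by auto
  obtain \<sigma>1 m1 r1 where 1: "\<sigma>1 \<in> Sset" "m1 \<in> realP" "1 + \<sigma>1 = m1 + a * r1" using realP_ext[OF na] by blast
  obtain \<sigma>2 m2 r2 where 2: "\<sigma>2 \<in> Sset" "m2 \<in> realP" "1 + \<sigma>2 = m2 + b * r2" using realP_ext[OF nb] by blast
  have I: "myideal realP" by (rule realP_ideal)
  have "(1 + \<sigma>1) * (1 + \<sigma>2) = m1 * (m2 + b * r2) + m2 * (a * r1) + (a * b) * (r1 * r2)"
    by (simp add: 1(3) 2(3) algebra_simps)
  also have "\<dots> \<in> realP"
    by (rule myideal_add[OF I myideal_add[OF I myideal_mult2[OF I 1(2)] myideal_mult2[OF I 2(2)]] myideal_mult2[OF I assms]])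
  finally have "1 + (\<sigma>1 + \<sigma>2 + \<sigma>1 * \<sigma>2) \<in> realP" by (simp add: algebra_simps)
  moreover have "\<sigma>1 + \<sigma>2 + \<sigma>1 * \<sigma>2 \<in> Sset" using 1(1) 2(1) by (intro Sset_plus Sset_mult)
  ultimately show False using realP_max by (auto simp: good_def)
qed

lemma realP_real:
  assumes neg: "(-1::'a::comm_ring_1) \<notin> SOS" and h: "b ^ 2 + a \<in> realP" and a: "a \<in> SOS"
  shows "(b::'a) \<in> realP"
proof (rule ccontr)
  assume nb: "b \<notin> realP"
  have SS: "Sset = (SOS :: 'a set)" using neg by (simp add: Sset_def)
  obtain \<sigma> m r where 1: "\<sigma> \<in> SOS" "m \<in> realP" "1 + \<sigma> = m + b * r" using realP_ext[OF nb] SS by blast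
  have I: "myideal realP" by (rule realP_ideal)
  have "(1 + \<sigma>) ^ 2 + a * r ^ 2 = m * (m + 2 * b * r) + (b ^ 2 + a) * r ^ 2"
    by (simp add: 1(3) algebra_simps power2_eq_square)
  also have "\<dots> \<in> realP" by (rule myideal_add[OF I myideal_mult2[OF I 1(2)] myideal_mult2[OF I h]])
  finally have "1 + ((\<sigma> + \<sigma>) + \<sigma> * \<sigma> + a * r ^ 2) \<in> realP"
    by (simp add: algebra_simps power2_eq_square)
  moreover have "(\<sigma> + \<sigma>) + \<sigma> * \<sigma> + a * r ^ 2 \<in> SOS"
    using 1(1) a by (intro SOS_plus SOS_mult SOS_mult_sq)
  ultimately show False using realP_max SS by (auto simp: good_def)
qed


section \<open>The quotient ring\<close>

lemma realP_0: "0 \<in> realP" by (rule myideal_0[OF realP_ideal])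

lemma realP_equivp: "equivp (\<lambda>x y. (x::'a::comm_ring_1) - y \<in> realP)"
proof (rule equivpI)
  show "reflp (\<lambda>x y. (x::'a) - y \<in> realP)" by (simp add: reflp_def realP_0)
  show "symp (\<lambda>x y. (x::'a) - y \<in> realP)"
    unfolding symp_def using myideal_neg[OF realP_ideal] by (metis minus_diff_eq)
  show "transp (\<lambda>x y. (x::'a) - y \<in> realP)"
  proof (rule transpI)
    fix x y z :: 'a assume "x - y \<in> realP" "y - z \<in> realP"
    then have "(x - y) + (y - z) \<in> realP" by (rule myideal_add[OF realP_ideal])
    then show "x - z \<in> realP" by simp
  qed
qed

quotient_type (overloaded) 'a rq = "'a::comm_ring_1" / "\<lambda>x y. x - y \<in> realP"
  morphisms rep_rq abs_rq
  by (rule realP_equivp)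

lemma realP_add': "x \<in> realP \<Longrightarrow> y \<in> realP \<Longrightarrow> x + y \<in> realP"
  by (rule myideal_add[OF realP_ideal])

instantiation rq :: (comm_ring_1) comm_ring_1
begin

lift_definition zero_rq :: "'a rq" is 0 .
lift_definition one_rq :: "'a rq" is 1 .
lift_definition plus_rq :: "'a rq \<Rightarrow> 'a rq \<Rightarrow> 'a rq" is "(+)"
proof -
  fix x1 y1 x2 y2 :: 'a
  assume "x1 - y1 \<in> realP" "x2 - y2 \<in> realP"
  then have "(x1 - y1) + (x2 - y2) \<in> realP" by (rule realP_add')
  then show "x1 + x2 - (y1 + y2) \<in> realP" by (simp add: algebra_simps)
qed
lift_definition uminus_rq :: "'a rq \<Rightarrow> 'a rq" is uminus
proof -
  fix x y :: 'a
  assume "x - y \<in> realP"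
  then have "- (x - y) \<in> realP" by (rule myideal_neg[OF realP_ideal])
  then show "- x - - y \<in> realP" by (simp add: algebra_simps)
qed
lift_definition minus_rq :: "'a rq \<Rightarrow> 'a rq \<Rightarrow> 'a rq" is "(-)"
proof -
  fix x1 y1 x2 y2 :: 'a
  assume "x1 - y1 \<in> realP" "x2 - y2 \<in> realP"
  then have "(x1 - y1) - (x2 - y2) \<in> realP" by (rule myideal_diff[OF realP_ideal])
  then show "x1 - x2 - (y1 - y2) \<in> realP" by (simp add: algebra_simps)
qed
lift_definition times_rq :: "'a rq \<Rightarrow> 'a rq \<Rightarrow> 'a rq" is "(*)"
proof -
  fix x1 y1 x2 y2 :: 'a
  assume a: "x1 - y1 \<in> realP" "x2 - y2 \<in> realP"
  have "x1 * (x2 - y2) + (x1 - y1) * y2 \<in> realP"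
    by (rule realP_add'[OF myideal_mult[OF realP_ideal a(2)] myideal_mult2[OF realP_ideal a(1)]])
  then show "x1 * x2 - y1 * y2 \<in> realP" by (simp add: algebra_simps)
qed

instance
proof
  fix a b c :: "'a rq"
  show "a + b + c = a + (b + c)" by transfer (simp add: realP_0 algebra_simps)
  show "a + b = b + a" by transfer (simp add: realP_0 algebra_simps)
  show "0 + a = a" by transfer (simp add: realP_0)
  show "- a + a = 0" by transfer (simp add: realP_0)
  show "a - b = a + - b" by transfer (simp add: realP_0)
  show "a * b * c = a * (b * c)" by transfer (simp add: realP_0 algebra_simps)
  show "a * b = b * a" by transfer (simp add: realP_0 algebra_simps)
  show "1 * a = a" by transfer (simp add: realP_0)
  show "(a + b) * c = a * c + b * c" by transfer (simp add: realP_0 algebra_simps)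
  show "(0::'a rq) \<noteq> 1"
  proof transfer
    show "\<not> (0::'a) - 1 \<in> realP"
      using myideal_neg[OF realP_ideal, of "-1"] realP_one by auto
  qed
qed

end

instance rq :: (comm_ring_1) idom
proof
  fix a b :: "'a rq"
  show "a \<noteq> 0 \<Longrightarrow> b \<noteq> 0 \<Longrightarrow> a * b \<noteq> 0"
    by transfer (use realP_prime in auto)
qed

lemma abs_rq_add: "abs_rq (x + y) = abs_rq x + abs_rq y" by (simp add: plus_rq.abs_eq)
lemma abs_rq_mult: "abs_rq (x * y) = abs_rq x * abs_rq y" by (simp add: times_rq.abs_eq)
lemma abs_rq_0: "abs_rq 0 = 0" by (simp add: zero_rq.abs_eq)
lemma abs_rq_1: "abs_rq 1 = 1" by (simp add: one_rq.abs_eq)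
lemma abs_rq_eq0: "abs_rq x = 0 \<longleftrightarrow> x \<in> realP"
  by (metis zero_rq.abs_eq rq.abs_eq_iff diff_zero)
lemma abs_rq_sum: "abs_rq (sum f A) = (\<Sum>a\<in>A. abs_rq (f a))"
  by (induction A rule: infinite_finite_induct) (simp_all add: abs_rq_0 abs_rq_add)
lemma abs_rq_power: "abs_rq (x ^ n) = abs_rq x ^ n"
  by (induction n) (simp_all add: abs_rq_1 abs_rq_mult)

lemma SOS_sum_set: "finite A \<Longrightarrow> (\<Sum>i\<in>A. (f i :: 'a::comm_ring_1) ^ 2) \<in> SOS"
  by (induction A rule: finite_induct) (simp_all add: SOS.SOS_0 SOS_plus SOS_sq)

lemma rq_real:
  fixes x :: "nat \<Rightarrow> 'a::comm_ring_1 rq"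
  assumes neg: "\<not> sum_of_powers (UNIV :: 'a::comm_ring_1 set) 2 (-1)"
    and h: "(\<Sum>i<k. (x i :: 'a rq) ^ 2) = 0" and i: "i < k"
  shows "x i = 0"
proof -
  have neg': "(-1::'a) \<notin> SOS" using neg SOS_sum_powers by blast
  define r where "r j = rep_rq (x j)" for j
  have xr: "x j = abs_rq (r j)" for j unfolding r_def by (simp add: Quotient_abs_rep[OF Quotient_rq])
  have "abs_rq (\<Sum>j<k. r j ^ 2) = 0" using h by (simp add: abs_rq_sum abs_rq_power xr)
  then have "(\<Sum>j<k. r j ^ 2) \<in> realP" by (simp add: abs_rq_eq0)
  moreover have "(\<Sum>j<k. r j ^ 2) = r i ^ 2 + (\<Sum>j\<in>{..<k}-{i}. r j ^ 2)"
    using i by (subst sum.remove[of "{..<k}" i]) auto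
  ultimately have "r i ^ 2 + (\<Sum>j\<in>{..<k}-{i}. r j ^ 2) \<in> realP" by simp
  then have "r i \<in> realP" by (rule realP_real[OF neg' _ SOS_sum_set]) auto
  then show ?thesis by (simp add: xr abs_rq_eq0)
qed



definition mv :: "(nat \<Rightarrow>\<^sub>0 nat) \<Rightarrow> 'c::comm_ring_1 poly poly" where
  "mv m = (if Poly_Mapping.keys m \<subseteq> {0,1}
     then [:0,1:] ^ Poly_Mapping.lookup m 0 * [:[:0,1:]:] ^ Poly_Mapping.lookup m 1 else 0)"

lemma keys_add_nat: "Poly_Mapping.keys (a + b :: 'k \<Rightarrow>\<^sub>0 nat) = Poly_Mapping.keys a \<union> Poly_Mapping.keys b"
  by (auto simp: in_keys_iff lookup_add)

lemma mv_0: "mv 0 = 1"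
  by (simp add: mv_def)

lemma mv_add: "mv (a + b) = mv a * mv b"
proof (cases "Poly_Mapping.keys a \<subseteq> {0,1} \<and> Poly_Mapping.keys b \<subseteq> {0,1}")
  case True
  then show ?thesis by (simp add: mv_def keys_add_nat lookup_add power_add mult_ac)
next
  case False
  then show ?thesis by (auto simp: mv_def keys_add_nat)
qed

definition phiH :: "((nat \<Rightarrow>\<^sub>0 nat) \<Rightarrow>\<^sub>0 'a::comm_ring_1) \<Rightarrow> 'a rq poly poly" where
  "phiH p = (\<Sum>m\<in>Poly_Mapping.keys p. [:[:abs_rq (Poly_Mapping.lookup p m):]:] * mv m)"

lemma phiH_0: "phiH 0 = 0" by (simp add: phiH_def)

lemma phiH_add: "phiH (p + q) = phiH p + phiH q"
  unfolding phiH_def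
proof (rule setsum_keys_plus_distrib)
  fix k :: "nat \<Rightarrow>\<^sub>0 nat" and x y :: 'a
  have "[:abs_rq x + abs_rq y:] = [:abs_rq x:] + [:abs_rq y:]" by simp
  then show "[:[:abs_rq (x + y):]:] * mv k = [:[:abs_rq x:]:] * mv k + [:[:abs_rq y:]:] * mv k"
    by (simp add: abs_rq_add flip: smult_add_left)
qed (simp add: abs_rq_0)

lemma phiH_single: "phiH (Poly_Mapping.single m c) = [:[:abs_rq c:]:] * mv m"
  by (simp add: phiH_def abs_rq_0)

lemma phiH_sum: "phiH (sum f A) = (\<Sum>a\<in>A. phiH (f a))"
  by (induction A rule: infinite_finite_induct) (simp_all add: phiH_0 phiH_add)

lemma pm_expand: "p = (\<Sum>m\<in>Poly_Mapping.keys p. Poly_Mapping.single m (Poly_Mapping.lookup p m))"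
proof (rule poly_mapping_eqI)
  fix k
  have "Poly_Mapping.lookup (\<Sum>m\<in>Poly_Mapping.keys p. Poly_Mapping.single m (Poly_Mapping.lookup p m)) k
      = (\<Sum>m\<in>Poly_Mapping.keys p. Poly_Mapping.lookup (Poly_Mapping.single m (Poly_Mapping.lookup p m)) k)"
    by (simp add: lookup_sum)
  also have "\<dots> = Poly_Mapping.lookup p k"
    by (simp add: lookup_single when_def in_keys_iff)
  finally show "Poly_Mapping.lookup p k = Poly_Mapping.lookup (\<Sum>m\<in>Poly_Mapping.keys p. Poly_Mapping.single m (Poly_Mapping.lookup p m)) k" by simp
qed

lemma const_mult: "[:[:x * y:]:] = [:[:x:]:] * ([:[:y:]:] :: 'b::comm_ring_1 poly poly)"
  by simp

lemma phiH_mult: "phiH (p * q) = phiH p * phiH q"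
proof -
  let ?P = "Poly_Mapping.keys p" and ?Q = "Poly_Mapping.keys q"
  let ?pa = "Poly_Mapping.lookup p" and ?qb = "Poly_Mapping.lookup q"
  have "p * q = (\<Sum>a\<in>?P. Poly_Mapping.single a (?pa a)) * (\<Sum>b\<in>?Q. Poly_Mapping.single b (?qb b))"
    by (simp only: pm_expand[symmetric])
  also have "\<dots> = (\<Sum>a\<in>?P. \<Sum>b\<in>?Q. Poly_Mapping.single (a + b) (?pa a * ?qb b))"
    by (simp add: sum_product mult_single)
  finally have pq: "p * q = (\<Sum>a\<in>?P. \<Sum>b\<in>?Q. Poly_Mapping.single (a + b) (?pa a * ?qb b))" .
  have "phiH (p * q) = (\<Sum>a\<in>?P. \<Sum>b\<in>?Q. [:[:abs_rq (?pa a):]:] * mv a * ([:[:abs_rq (?qb b):]:] * mv b))"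
    by (simp add: pq phiH_sum phiH_single abs_rq_mult mv_add mult_ac)
  also have "\<dots> = phiH p * phiH q"
    by (simp add: phiH_def sum_product)
  finally show ?thesis .
qed

lemma phiH_one: "phiH (1 :: (nat \<Rightarrow>\<^sub>0 nat) \<Rightarrow>\<^sub>0 'a::comm_ring_1) = 1"
proof -
  have "phiH (Poly_Mapping.single 0 (1::'a)) = [:[:abs_rq 1:]:] * mv 0" by (rule phiH_single)
  moreover have "[:[:1::'a rq:]:] = 1" by (simp add: one_pCons)
  ultimately show ?thesis by (simp add: abs_rq_1 mv_0)
qed

lemma phiH_power: "phiH (p ^ n) = phiH p ^ n"
  by (induction n) (simp_all add: phiH_one phiH_mult)

lemma phiH_prod: "phiH (prod f A) = (\<Prod>a\<in>A. phiH (f a))"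
  by (induction A rule: infinite_finite_induct) (simp_all add: phiH_one phiH_mult)

lemma phiH_of_nat: "phiH (of_nat n) = of_nat n"
  by (induction n) (simp_all add: phiH_0 phiH_one phiH_add)

lemma phiH_diff: "phiH (p - q) = phiH p - phiH q"
  using phiH_add[of "p - q" q] by (simp add: algebra_simps)

definition VarP :: "nat \<Rightarrow> (nat \<Rightarrow>\<^sub>0 nat) \<Rightarrow>\<^sub>0 'a::comm_ring_1" where
  "VarP i = Poly_Mapping.single (Poly_Mapping.single i 1) 1"

lemma phiH_X: "phiH (VarP 0 :: (nat \<Rightarrow>\<^sub>0 nat) \<Rightarrow>\<^sub>0 'a::comm_ring_1) = [:0,1:]"
proof -
  have l: "Poly_Mapping.lookup (Poly_Mapping.single (0::nat) (Suc 0)) (Suc 0) = 0"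
    by (rule lookup_single_not_eq) simp
  show ?thesis by (simp add: VarP_def phiH_single abs_rq_1 mv_def l pCons_one)
qed

lemma phiH_Y: "phiH (VarP 1 :: (nat \<Rightarrow>\<^sub>0 nat) \<Rightarrow>\<^sub>0 'a::comm_ring_1) = [:[:0,1:]:]"
  by (simp add: VarP_def phiH_single abs_rq_1 mv_def lookup_single when_def one_pCons)



lemma pr_add: "p \<in> poly_ring_n n \<Longrightarrow> q \<in> poly_ring_n n \<Longrightarrow> p + q \<in> poly_ring_n n"
  unfolding poly_ring_n_def using keys_add[of p q] by blast

lemma pr_diff: "p \<in> poly_ring_n n \<Longrightarrow> q \<in> poly_ring_n n \<Longrightarrow> p - q \<in> poly_ring_n n"
proof -
  assume a: "p \<in> poly_ring_n n" "q \<in> poly_ring_n n"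
  have "Poly_Mapping.keys (p - q) \<subseteq> Poly_Mapping.keys p \<union> Poly_Mapping.keys q"
    by (auto simp: in_keys_iff lookup_minus)
  then show ?thesis using a unfolding poly_ring_n_def by blast
qed

lemma pr_mult: "p \<in> poly_ring_n n \<Longrightarrow> q \<in> poly_ring_n n \<Longrightarrow> p * q \<in> poly_ring_n n"
proof -
  assume a: "p \<in> poly_ring_n n" "q \<in> poly_ring_n n"
  show ?thesis unfolding poly_ring_n_def
  proof (rule CollectI, rule ballI)
    fix mon assume "mon \<in> Poly_Mapping.keys (p * q)"
    then obtain x y where "mon = x + y" "x \<in> Poly_Mapping.keys p" "y \<in> Poly_Mapping.keys q"
      using keys_mult[of p q] by blast
    then show "Poly_Mapping.keys mon \<subseteq> {..<n}"
      using a unfolding poly_ring_n_def by (auto simp: keys_add_nat)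
  qed
qed

lemma pr_of_nat: "(of_nat m :: 'a::comm_ring_1 mpoly_pm) \<in> poly_ring_n n"
proof -
  have k: "Poly_Mapping.keys (of_nat m :: 'a mpoly_pm) \<subseteq> {0}"
    by (auto simp: in_keys_iff lookup_of_nat when_def split: if_splits)
  show ?thesis unfolding poly_ring_n_def
  proof (rule CollectI, rule ballI)
    fix mon assume "mon \<in> Poly_Mapping.keys (of_nat m :: 'a mpoly_pm)"
    then have "mon = 0" using k by blast
    then show "Poly_Mapping.keys mon \<subseteq> {..<n}" by simp
  qed
qed

lemma pr_one: "(1 :: 'a::comm_ring_1 mpoly_pm) \<in> poly_ring_n n"
  using pr_of_nat[of 1 n] by simp

lemma pr_var: "i < n \<Longrightarrow> (VarP i :: 'a::comm_ring_1 mpoly_pm) \<in> poly_ring_n n"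
  unfolding poly_ring_n_def VarP_def by auto

lemma pr_prod: "(\<And>a. a \<in> A \<Longrightarrow> f a \<in> poly_ring_n n) \<Longrightarrow> prod f A \<in> poly_ring_n n"
  by (induction A rule: infinite_finite_induct) (simp_all add: pr_one pr_mult)

lemma pr_power: "p \<in> poly_ring_n n \<Longrightarrow> p ^ k \<in> poly_ring_n n"
  by (induction k) (simp_all add: pr_one pr_mult)

lemma pr_sum: "(\<And>a. a \<in> A \<Longrightarrow> f a \<in> poly_ring_n n) \<Longrightarrow> sum f A \<in> poly_ring_n n"
proof (induction A rule: infinite_finite_induct)
  case (infinite A) then show ?case using pr_of_nat[of 0 n] by simp
next
  case empty then show ?case using pr_of_nat[of 0 n] by simp
next
  case (insert x F) then show ?case by (simp add: pr_add)
qed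

definition LX :: "nat \<Rightarrow> nat \<Rightarrow> nat \<Rightarrow> 'a::comm_ring_1 mpoly_pm" where
  "LX v N i = (\<Prod>m\<in>{..<N}-{i}. VarP v - of_nat m)"

definition uu :: "nat \<Rightarrow> nat \<Rightarrow> 'a::comm_ring_1 mpoly_pm" where
  "uu N i = LX 0 N i * LX 1 N i"

lemma uu_in: "1 < n \<Longrightarrow> uu N i \<in> poly_ring_n n"
  unfolding uu_def LX_def by (intro pr_mult pr_prod pr_diff pr_var pr_of_nat) auto

lemma emb_prod: "emb (prod f A) = (\<Prod>a\<in>A. emb (f a :: 'b::comm_ring_1 poly))"
  unfolding emb_def by (rule map_poly_prod_hom) auto

lemma const_prod: "[:prod f A:] = (\<Prod>a\<in>A. [:f a :: 'b::comm_ring_1:])"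
proof (induction A rule: infinite_finite_induct)
  case (insert x F)
  then show ?case by (simp add: insert(3)[symmetric])
qed (simp_all add: pCons_one)

lemma phiH_Y': "phiH (VarP (Suc 0) :: (nat \<Rightarrow>\<^sub>0 nat) \<Rightarrow>\<^sub>0 'a::comm_ring_1) = [:[:0,1:]:]"
  using phiH_Y by simp

lemma phiH_LX0: "phiH (LX 0 N i :: 'a::comm_ring_1 mpoly_pm) = emb (LL N i)"
proof -
  have "phiH (LX 0 N i :: 'a mpoly_pm) = (\<Prod>m\<in>{..<N}-{i}. [:0,1:] - of_nat m)"
    by (simp add: LX_def phiH_prod phiH_diff phiH_X phiH_of_nat)
  also have "\<dots> = (\<Prod>m\<in>{..<N}-{i}. emb [:- of_nat m, 1:])"
    by (rule prod.cong) (simp_all add: emb_pCons of_nat_poly)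
  also have "\<dots> = emb (LL N i)" by (simp add: LL_def emb_prod)
  finally show ?thesis .
qed

lemma phiH_LX1: "phiH (LX 1 N i :: 'a::comm_ring_1 mpoly_pm) = [:LL N i:]"
proof -
  have "phiH (LX 1 N i :: 'a mpoly_pm) = (\<Prod>m\<in>{..<N}-{i}. [:[:0,1:]:] - of_nat m)"
    by (simp add: LX_def phiH_prod phiH_diff phiH_Y' phiH_of_nat)
  also have "\<dots> = (\<Prod>m\<in>{..<N}-{i}. [:[:- of_nat m, 1:]:])"
    by (rule prod.cong) (simp_all add: of_nat_poly)
  also have "\<dots> = [:LL N i:]" by (simp add: LL_def const_prod)
  finally show ?thesis .
qed

lemma phiH_LX1': "phiH (LX (Suc 0) N i :: 'a::comm_ring_1 mpoly_pm) = [:LL N i:]"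
  using phiH_LX1 by simp

lemma phiH_uu: "phiH (uu N i :: 'a::comm_ring_1 mpoly_pm) = UU N i"
  by (simp add: uu_def phiH_mult phiH_LX0 phiH_LX1' UU_def)


theorem mainTheorem3:
  fixes s n :: nat
  assumes "s \<ge> 1" and "n > 1"
    and "\<not> sum_of_powers (UNIV :: 'a::comm_ring_1 set) 2 (-1)"
  shows "pythagoras_number (poly_ring_n n :: 'a mpoly_pm set) (2 * s) = \<infinity>"
proof -
  let ?S = "poly_ring_n n :: 'a mpoly_pm set"
  have real: "\<And>(x::nat \<Rightarrow> 'a rq) k i. (\<Sum>i<k. x i ^ 2) = 0 \<Longrightarrow> i < k \<Longrightarrow> x i = 0"
    using rq_real[OF assms(3)] by blast
  have no: "\<not> (\<exists>l>0. \<forall>y. y \<in> ?S \<and> sum_of_powers ?S (2*s) y \<longrightarrow> (\<exists>k\<le>l. sum_of_powers_len ?S (2*s) k y))"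
  proof
    assume "\<exists>l>0. \<forall>y. y \<in> ?S \<and> sum_of_powers ?S (2*s) y \<longrightarrow> (\<exists>k\<le>l. sum_of_powers_len ?S (2*s) k y)"
    then obtain l where l: "\<forall>y. y \<in> ?S \<and> sum_of_powers ?S (2*s) y \<longrightarrow> (\<exists>k\<le>l. sum_of_powers_len ?S (2*s) k y)"
      by blast
    define N where "N = Suc l"
    define f where "f = (\<Sum>i<N. uu N i ^ (2*s) :: 'a mpoly_pm)"
    have uin: "uu N i \<in> ?S" for i using uu_in assms(2) by blast
    have fin: "f \<in> ?S" unfolding f_def by (intro pr_sum pr_power uin)
    have fsop: "sum_of_powers ?S (2*s) f" unfolding sum_of_powers_def sum_of_powers_len_def f_def
      by (intro exI[of _ N] exI[of _ "uu N"]) (simp add: uin)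
    obtain k :: nat and g where k: "k \<le> l" and g: "f = (\<Sum>i<k. g i ^ (2*s))"
      using l fin fsop unfolding sum_of_powers_len_def by blast
    have eq: "(\<Sum>j<k. phiH (g j) ^ (2*s)) = (\<Sum>i<N. UU N i ^ (2*s))"
    proof -
      have "phiH f = (\<Sum>j<k. phiH (g j) ^ (2*s))" by (simp add: g phiH_sum phiH_power)
      moreover have "phiH f = (\<Sum>i<N. UU N i ^ (2*s))" by (simp add: f_def phiH_sum phiH_power phiH_uu)
      ultimately show ?thesis by simp
    qed
    have "N \<le> k" by (rule core[OF _ assms(1) eq]) (rule real; assumption)
    then show False using k N_def by simp
  qed
  then show ?thesis unfolding pythagoras_number_def by simp
qed


end
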